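(* Let $n\ge 1$ and let $M\le N$ be integers. For each $s\in\{0,1,\dots,n\}$, let $\mathcal P_s$ be the set of pure diagrams $\pi(d_0,\dots,d_t)$ lying in $B_{M,N}$ with codimension $t\ge s$, partially ordered as described in the context. Then every maximal chain in $\mathcal P_s$ is a basis of the $\mathbb Q$-vector space $B^s_{M,N}$.
   Context: $B_{M,N}$ is the $\mathbb Q$-vector space of arrays $\beta=(\beta_{i,j})$ indexed by $0\le i\le n$, $j\in\mathbb Z$, with $\beta_{i,j}=0$ unless $M+i\le j\le N+i$ (so $\dim B_{M,N}=(n+1)(N-M+1)$). For $0\le s\le n$, $B^s_{M,N}$ is the subspace of those $\beta$ satisfying the Herzog–Kühl equations $\sum_{i=0}^n\sum_{j}(-1)^i\beta_{i,j}\,j^m=0$ for $m=0,1,\dots,s-1$. For integers $d_0<d_1<\dots<d_t$ with $0\le t\le n$, the pure diagram $\pi(d_0,\dots,d_t)$ is the array whose entry in position $(i,d_i)$ is $(-1)^i\prod_{0\le j\le t,\,j\ne i}\frac{1}{d_j-d_i}$ for $i=0,\dots,t$, and whose other entries are $0$; its codimension is $t$. It lies in $B_{M,N}$ iff $M+i\le d_i\le N+i$ for all $i$. Partial order: $\pi(d_0,\dots,d_t)\le\pi(d'_0,\dots,d'_u)$ iff $t\ge u$ and $d_i\le d'_i$ for $i=0,\dots,u$. A chain is a totally ordered subset; a maximal chain of a set is a chain in that set not properly contained in another chain in that set. *)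

theory Defs
  imports Complex_Main "HOL-Library.Function_Algebras"
begin

type_synonym array = "nat \<Rightarrow> int \<Rightarrow> rat"

definition arr_scale :: "rat \<Rightarrow> array \<Rightarrow> array" where
  "arr_scale c f = (\<lambda>i j. c * f i j)"

interpretation arr: vector_space arr_scale
  by unfold_locales (auto simp: arr_scale_def fun_eq_iff algebra_simps)

definition Bspace :: "nat \<Rightarrow> int \<Rightarrow> int \<Rightarrow> array set" where
  "Bspace n M N = {\<beta>. \<forall>i j. \<beta> i j \<noteq> 0 \<longrightarrow> i \<le> n \<and> M + int i \<le> j \<and> j \<le> N + int i}"

text \<open>B^s_{M,N}: the Herzog--Kuehl equations for m = 0, ..., s-1 (the sum over j is finite
  on B_{M,N}, namely over M+i <= j <= N+i).\<close>
definition BHK :: "nat \<Rightarrow> int \<Rightarrow> int \<Rightarrow> nat \<Rightarrow> array set" where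
  "BHK n M N s = {\<beta> \<in> Bspace n M N.
     \<forall>m<s. (\<Sum>i\<le>n. \<Sum>j\<in>{M + int i..N + int i}. (-1) ^ i * \<beta> i j * of_int j ^ m) = 0}"

text \<open>Pure diagram pi(d_0,...,d_t), the degree sequence given as the list d of length t+1.\<close>
definition pure :: "int list \<Rightarrow> array" where
  "pure d = (\<lambda>i j. if i < length d \<and> j = d ! i
      then (-1) ^ i * (\<Prod>k\<in>{0..<length d} - {i}. 1 / of_int (d ! k - d ! i))
      else 0)"

definition degseq :: "nat \<Rightarrow> int list \<Rightarrow> bool" where
  "degseq n d \<longleftrightarrow> d \<noteq> [] \<and> length d - 1 \<le> n \<and> sorted_wrt (<) d"

text \<open>P_s: pure diagrams in B_{M,N} of codimension t >= s (represented by degree sequences).\<close>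
definition Pset :: "nat \<Rightarrow> int \<Rightarrow> int \<Rightarrow> nat \<Rightarrow> int list set" where
  "Pset n M N s = {d. degseq n d \<and> pure d \<in> Bspace n M N \<and> s \<le> length d - 1}"

definition pd_le :: "int list \<Rightarrow> int list \<Rightarrow> bool" where
  "pd_le d d' \<longleftrightarrow> length d' \<le> length d \<and> (\<forall>i<length d'. d ! i \<le> d' ! i)"

definition is_chain :: "int list set \<Rightarrow> bool" where
  "is_chain C \<longleftrightarrow> (\<forall>a\<in>C. \<forall>b\<in>C. pd_le a b \<or> pd_le b a)"

definition maximal_chain_in :: "int list set \<Rightarrow> int list set \<Rightarrow> bool" where
  "maximal_chain_in C P \<longleftrightarrow> C \<subseteq> P \<and> is_chain C \<and>
     (\<forall>C'. C \<subseteq> C' \<and> C' \<subseteq> P \<and> is_chain C' \<longrightarrow> C' = C)"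

end

theory Submission
  imports Defs "HOL-Computational_Algebra.Polynomial"
begin

lemma divdiff_identity:
  fixes x :: "nat \<Rightarrow> rat"
  assumes inj: "inj_on x {..t}" and mt: "m \<le> t"
  shows "(\<Sum>i\<le>t. x i ^ m / (\<Prod>k\<in>{..t}-{i}. (x i - x k))) = (if m = t then 1 else 0)"
proof -
  let ?I = "{..t}"
  define w where "w i = (\<Prod>k\<in>?I-{i}. (x i - x k))" for i
  define p where "p i = (\<Prod>k\<in>?I-{i}. [:- x k, 1:])" for i
  define q where "q = (\<Sum>i\<in>?I. smult (x i ^ m / w i) (p i)) - monom 1 m"
  have w0: "w i \<noteq> 0" if "i \<in> ?I" for i
    unfolding w_def using inj that by (auto simp: inj_on_def)
  have pnz: "[:- x k, 1:] \<noteq> 0" for k by simp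
  have degp: "degree (p i) = t" if "i \<in> ?I" for i
  proof -
    have "degree (p i) = (\<Sum>k\<in>?I-{i}. degree [:- x k, 1:])"
      unfolding p_def by (rule degree_prod_eq_sum_degree) simp
    also have "\<dots> = card (?I - {i})" by simp
    also have "\<dots> = t" using that by simp
    finally show ?thesis .
  qed
  have lcp: "coeff (p i) t = 1" if "i \<in> ?I" for i
  proof -
    have "lead_coeff (p i) = 1" unfolding p_def lead_coeff_prod by simp
    thus ?thesis using degp[OF that] by simp
  qed
  have polyp: "poly (p i) y = (\<Prod>k\<in>?I-{i}. (y - x k))" for i y
    unfolding p_def poly_prod by simp
  have polyp_other: "poly (p i) (x j) = 0" if "i \<in> ?I" "j \<in> ?I" "j \<noteq> i" for i j
    unfolding polyp using that by (intro prod_zero) auto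
  have roots: "poly q (x j) = 0" if "j \<in> ?I" for j
  proof -
    have "poly q (x j) = (\<Sum>i\<in>?I. x i ^ m / w i * poly (p i) (x j)) - x j ^ m"
      unfolding q_def by (simp add: poly_sum poly_monom)
    also have "(\<Sum>i\<in>?I. x i ^ m / w i * poly (p i) (x j)) = x j ^ m / w j * poly (p j) (x j)"
      by (rule sum.remove[OF _ that, THEN trans]) (use polyp_other that in auto)
    also have "poly (p j) (x j) = w j" unfolding polyp w_def ..
    finally show ?thesis using w0[OF that] by simp
  qed
  have degq: "degree q \<le> t"
    unfolding q_def
    by (intro degree_diff_le degree_sum_le) (auto simp: degree_monom_le degp mt
          intro: order.trans[OF degree_smult_le] order.trans[OF degree_monom_le])
  have q0: "q = 0"
  proof (rule ccontr)
    assume "q \<noteq> 0"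
    hence "card {y. poly q y = 0} \<le> degree q" by (rule card_poly_roots_bound)
    moreover have "x ` ?I \<subseteq> {y. poly q y = 0}" using roots by auto
    moreover have "finite {y. poly q y = 0}" using \<open>q \<noteq> 0\<close> poly_roots_finite by blast
    ultimately have "card (x ` ?I) \<le> t" using degq card_mono by (meson order.trans)
    moreover have "card (x ` ?I) = Suc t" using card_image[OF inj] by simp
    ultimately show False by simp
  qed
  have "coeff q t = (\<Sum>i\<in>?I. x i ^ m / w i) - (if m = t then 1 else 0)"
    unfolding q_def by (simp add: coeff_sum lcp)
  thus ?thesis using q0 unfolding w_def by simp
qed

lemma sorted_nth_neq: "sorted_wrt (<) (d::int list) \<Longrightarrow> i < length d \<Longrightarrow> k < length d \<Longrightarrow> k \<noteq> i \<Longrightarrow> d ! k \<noteq> d ! i"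
proof -
  assume a: "sorted_wrt (<) d" "i < length d" "k < length d" "k \<noteq> i"
  show ?thesis
  proof (cases "k < i")
    case True thus ?thesis using sorted_wrt_nth_less[OF a(1) True a(2)] by simp
  next
    case False hence "i < k" using a(4) by simp
    thus ?thesis using sorted_wrt_nth_less[OF a(1) _ a(3)] by fastforce
  qed
qed

lemma pure_nz:
  assumes "sorted_wrt (<) d"
  shows "pure d i j \<noteq> 0 \<longleftrightarrow> i < length d \<and> j = d ! i"
proof -
  have "(\<Prod>k\<in>{0..<length d} - {i}. 1 / of_int (d ! k - d ! i) :: rat) \<noteq> 0" if "i < length d"
    using sorted_nth_neq[OF assms that] by (auto simp: prod_zero_iff)
  thus ?thesis unfolding pure_def by auto
qed

lemma pure_inj:
  assumes "sorted_wrt (<) d" "sorted_wrt (<) e" "pure d = pure e"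
  shows "d = e"
proof -
  have *: "i < length d \<and> j = d ! i \<longleftrightarrow> i < length e \<and> j = e ! i" for i j
    using pure_nz[OF assms(1), of i j] pure_nz[OF assms(2), of i j] assms(3) by simp
  have "length d = length e"
  proof (rule ccontr)
    assume "length d \<noteq> length e"
    then consider "length d < length e" | "length e < length d" by linarith
    thus False
    proof cases
      case 1 thus False using *[of "length d" "e ! length d"] by simp
    next
      case 2 thus False using *[of "length e" "d ! length e"] by simp
    qed
  qed
  moreover have "d ! i = e ! i" if "i < length d" for i using *[of i "d ! i"] that by simp
  ultimately show ?thesis by (simp add: nth_equalityI)
qed

lemma pure_in_Bspace:
  assumes "sorted_wrt (<) d"
  shows "pure d \<in> Bspace n M N \<longleftrightarrow> (\<forall>i<length d. i \<le> n \<and> M + int i \<le> d ! i \<and> d ! i \<le> N + int i)"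
  unfolding Bspace_def using pure_nz[OF assms] by auto

lemma sum_arr_apply: "(sum f S :: array) i j = (\<Sum>x\<in>S. f x i j)"
  by (induction S rule: infinite_finite_induct) auto

definition HKf :: "nat \<Rightarrow> int \<Rightarrow> int \<Rightarrow> nat \<Rightarrow> array \<Rightarrow> rat" where
  "HKf n M N m \<beta> = (\<Sum>i\<le>n. \<Sum>j\<in>{M + int i..N + int i}. (-1) ^ i * \<beta> i j * of_int j ^ m)"

lemma HKf_add: "HKf n M N m (x + y) = HKf n M N m x + HKf n M N m y"
  unfolding HKf_def by (simp add: algebra_simps sum.distrib)

lemma HKf_scale: "HKf n M N m (arr_scale c x) = c * HKf n M N m x"
  unfolding HKf_def arr_scale_def by (simp add: sum_distrib_left algebra_simps)

lemma HKf_zero: "HKf n M N m 0 = 0"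
  unfolding HKf_def by simp

lemma HKf_sum: "HKf n M N m (sum f S) = (\<Sum>x\<in>S. HKf n M N m (f x))"
proof (induction S rule: infinite_finite_induct)
  case (insert x F)
  thus ?case by (simp only: sum.insert[OF insert(1,2)] HKf_add insert(3))
next
  case (infinite A) thus ?case by (simp only: sum.infinite[OF infinite] HKf_zero)
qed (simp only: sum.empty HKf_zero)

lemma BHK_alt: "BHK n M N s = {\<beta> \<in> Bspace n M N. \<forall>m<s. HKf n M N m \<beta> = 0}"
  unfolding BHK_def HKf_def ..

lemma HKf_pure:
  assumes sd: "sorted_wrt (<) d" and B: "pure d \<in> Bspace n M N"
  shows "HKf n M N m (pure d) = (\<Sum>i<length d. (\<Prod>k\<in>{0..<length d} - {i}. 1 / of_int (d ! k - d ! i)) * of_int (d ! i) ^ m)"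
proof -
  have bnd: "i \<le> n \<and> M + int i \<le> d ! i \<and> d ! i \<le> N + int i" if "i < length d" for i
    using B pure_in_Bspace[OF sd] that by auto
  have inner: "(\<Sum>j\<in>{M + int i..N + int i}. (-1) ^ i * pure d i j * of_int j ^ m) =
      (if i < length d then (\<Prod>k\<in>{0..<length d} - {i}. 1 / of_int (d ! k - d ! i)) * of_int (d ! i) ^ m else 0)" for i
  proof (cases "i < length d")
    case True
    have "(\<Sum>j\<in>{M + int i..N + int i}. (-1) ^ i * pure d i j * of_int j ^ m) =
        (\<Sum>j\<in>{M + int i..N + int i}. if j = d ! i then (-1) ^ i * pure d i (d ! i) * of_int (d ! i) ^ m else 0)"
      by (rule sum.cong) (auto simp: pure_def)
    also have "\<dots> = (-1) ^ i * pure d i (d ! i) * of_int (d ! i) ^ m"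
      using bnd[OF True] by (simp add: sum.delta')
    finally show ?thesis using True by (simp add: pure_def)
  next
    case False
    thus ?thesis by (simp add: pure_def)
  qed
  have len: "length d \<le> Suc n"
  proof (rule ccontr)
    assume "\<not> ?thesis" hence "Suc n < length d" by simp
    thus False using bnd[of "Suc n"] by simp
  qed
  have "HKf n M N m (pure d) = (\<Sum>i\<le>n. if i < length d then (\<Prod>k\<in>{0..<length d} - {i}. 1 / of_int (d ! k - d ! i)) * of_int (d ! i) ^ m else 0)"
    unfolding HKf_def inner ..
  also have "\<dots> = (\<Sum>i\<in>{..n} \<inter> {i. i < length d}. (\<Prod>k\<in>{0..<length d} - {i}. 1 / of_int (d ! k - d ! i)) * of_int (d ! i) ^ m)"
    by (simp add: sum.inter_restrict del: of_int_diff)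
  also have "{..n} \<inter> {i. i < length d} = {..<length d}" using len by auto
  finally show ?thesis .
qed

lemma HKf_pure_val:
  assumes sd: "sorted_wrt (<) d" and B: "pure d \<in> Bspace n M N" and len: "length d = Suc t" and mt: "m \<le> t"
  shows "HKf n M N m (pure d) = (if m = t then (-1) ^ t else 0)"
proof -
  define x where "x i = (of_int (d ! i) :: rat)" for i
  have inj: "inj_on x {..t}"
    unfolding inj_on_def x_def of_int_eq_iff using sorted_nth_neq[OF sd] len by (metis atMost_iff less_Suc_eq_le)
  have eq: "(\<Prod>k\<in>{0..<length d} - {i}. 1 / of_int (d ! k - d ! i) :: rat) = (-1) ^ t / (\<Prod>k\<in>{..t}-{i}. (x i - x k))"
    if "i \<le> t" for i
  proof -
    have "{0..<length d} - {i} = {..t} - {i}" using len by auto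
    hence "(\<Prod>k\<in>{0..<length d} - {i}. 1 / of_int (d ! k - d ! i) :: rat) = (\<Prod>k\<in>{..t}-{i}. (-1) / (x i - x k))"
      by (simp add: x_def minus_divide_right[symmetric] del: minus_divide_right)
        (rule prod.cong, auto simp: divide_simps)
    also have "\<dots> = (-1) ^ card ({..t}-{i}) / (\<Prod>k\<in>{..t}-{i}. (x i - x k))"
    proof -
      have "(\<Prod>k\<in>{..t}-{i}. (-1) / (x i - x k)) = (\<Prod>k\<in>{..t}-{i}. (-1)) / (\<Prod>k\<in>{..t}-{i}. (x i - x k))"
        by (rule prod_dividef)
      thus ?thesis by simp
    qed
    also have "card ({..t}-{i}) = t" using that by simp
    finally show ?thesis .
  qed
  have "HKf n M N m (pure d) = (\<Sum>i\<le>t. (-1) ^ t * (x i ^ m / (\<Prod>k\<in>{..t}-{i}. (x i - x k))))"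
    unfolding HKf_pure[OF sd B]
  proof (rule sum.cong)
    show "{..<length d} = {..t}" using len by auto
  next
    fix i assume "i \<in> {..t}"
    hence it: "i \<le> t" by simp
    show "(\<Prod>k\<in>{0..<length d} - {i}. 1 / of_int (d ! k - d ! i)) * of_int (d ! i) ^ m =
      (-1) ^ t * (x i ^ m / (\<Prod>k\<in>{..t}-{i}. (x i - x k)))"
      unfolding eq[OF it] by (simp add: x_def)
  qed
  also have "\<dots> = (-1) ^ t * (if m = t then 1 else 0)"
    by (subst sum_distrib_left[symmetric], subst divdiff_identity[OF inj mt]) (rule refl)
  finally show ?thesis by simp
qed

lemma Pset_iff:
  "d \<in> Pset n M N s \<longleftrightarrow> sorted_wrt (<) d \<and> s < length d \<and> length d \<le> Suc n \<and>
     (\<forall>i<length d. M + int i \<le> d ! i \<and> d ! i \<le> N + int i)"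
proof -
  have "pure d \<in> Bspace n M N \<longleftrightarrow> (\<forall>i<length d. i \<le> n \<and> M + int i \<le> d ! i \<and> d ! i \<le> N + int i)"
    if "sorted_wrt (<) d" using pure_in_Bspace[OF that] .
  thus ?thesis unfolding Pset_def degseq_def
    by (cases d) (auto simp: less_Suc_eq_le)
qed

lemma Pset_len: "d \<in> Pset n M N s \<Longrightarrow> i < length d \<Longrightarrow> i \<le> n"
  unfolding Pset_iff by auto

lemma pd_le_refl: "pd_le d d" unfolding pd_le_def by simp

lemma pd_le_trans: "pd_le a b \<Longrightarrow> pd_le b c \<Longrightarrow> pd_le a c"
  unfolding pd_le_def by (meson dual_order.trans order_less_le_trans)

definition gph :: "int \<Rightarrow> int \<Rightarrow> int list \<Rightarrow> nat \<Rightarrow> int" where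
  "gph M N d i = (if i < length d then d ! i - M - int i else N - M + 1)"

definition phi :: "nat \<Rightarrow> int \<Rightarrow> int \<Rightarrow> int list \<Rightarrow> int" where
  "phi n M N d = (\<Sum>i\<le>n. gph M N d i)"

lemma phi_strict:
  assumes d: "d \<in> Pset n M N s" and e: "e \<in> Pset n M N s" and le: "pd_le d e" and ne: "d \<noteq> e"
  shows "phi n M N d < phi n M N e"
proof -
  have lens: "length e \<le> length d" and lee: "\<And>i. i < length e \<Longrightarrow> d ! i \<le> e ! i"
    using le unfolding pd_le_def by auto
  have bd: "\<And>i. i < length d \<Longrightarrow> d ! i \<le> N + int i" using d unfolding Pset_iff by auto
  have mono: "gph M N d i \<le> gph M N e i" for i
    using lens lee[of i] bd[of i] unfolding gph_def by auto
  have "\<exists>i\<le>n. gph M N d i < gph M N e i"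
  proof (cases "length e = length d")
    case True
    then obtain i where i: "i < length d" "d ! i \<noteq> e ! i"
      using ne nth_equalityI by metis
    thus ?thesis using lee[of i] True Pset_len[OF d i(1)] unfolding gph_def
      by (intro exI[of _ i]) auto
  next
    case False
    hence "length e < length d" using lens by simp
    thus ?thesis using bd[of "length e"] Pset_len[OF d, of "length e"] unfolding gph_def
      by (intro exI[of _ "length e"]) auto
  qed
  thus ?thesis unfolding phi_def
    by (intro sum_strict_mono_ex1) (auto simp: mono)
qed

lemma phi_mono:
  assumes "d \<in> Pset n M N s" "e \<in> Pset n M N s" "pd_le d e"
  shows "phi n M N d \<le> phi n M N e"
  using phi_strict[OF assms] by (cases "d = e") auto

lemma incr_step:
  assumes a: "a \<in> Pset n M N s" and i: "i < length a" and bd: "a ! i + 1 \<le> N + int i"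
    and gap: "\<And>k. i < k \<Longrightarrow> k < length a \<Longrightarrow> a ! i + 1 < a ! k"
  defines "z \<equiv> a[i := a ! i + 1]"
  shows "z \<in> Pset n M N s \<and> pd_le a z \<and> phi n M N z = phi n M N a + 1"
proof -
  have A: "sorted_wrt (<) a" "s < length a" "length a \<le> Suc n"
    "\<And>j. j < length a \<Longrightarrow> M + int j \<le> a ! j \<and> a ! j \<le> N + int j"
    using a unfolding Pset_iff by auto
  have zl: "length z = length a" unfolding z_def by simp
  have zn: "z ! j = (if j = i then a ! i + 1 else a ! j)" if "j < length a" for j
    unfolding z_def using that i by auto
  have srt: "sorted_wrt (<) z"
    unfolding sorted_wrt_iff_nth_less zl
  proof (intro allI impI)
    fix j k assume jk: "j < k" "k < length a"
    have ak: "a ! j < a ! k" using A(1) jk by (simp add: sorted_wrt_iff_nth_less)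
    show "z ! j < z ! k"
    proof (cases "k = i")
      case True
      thus ?thesis using jk zn[of j] zn[of k] ak by auto
    next
      case False
      thus ?thesis using jk zn[of j] zn[of k] ak gap[of k] by auto
    qed
  qed
  have zP: "z \<in> Pset n M N s"
  proof -
    have "M + int j \<le> z ! j \<and> z ! j \<le> N + int j" if "j < length z" for j
      using that zl zn[of j] A(4)[of j] A(4)[OF i] bd by auto
    thus ?thesis unfolding Pset_iff using srt zl A(2,3) by auto
  qed
  have le: "pd_le a z" unfolding pd_le_def using zl zn by auto
  have g: "gph M N z j = gph M N a j + (if j = i then 1 else 0)" for j
    unfolding gph_def using zl zn i by auto
  have "phi n M N z = phi n M N a + (\<Sum>j\<le>n. if j = i then 1 else 0)"
    unfolding phi_def g sum.distrib ..
  also have "(\<Sum>j\<le>n. if j = i then (1::int) else 0) = 1"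
    using Pset_len[OF a i] by simp
  finally show ?thesis using zP le by simp
qed

lemma step_exists:
  assumes a: "a \<in> Pset n M N s" and b: "b \<in> Pset n M N s" and le: "pd_le a b" and ne: "a \<noteq> b"
  shows "\<exists>z\<in>Pset n M N s. pd_le a z \<and> pd_le z b \<and> phi n M N z = phi n M N a + 1"
proof -
  have A: "sorted_wrt (<) a" "s < length a" "length a \<le> Suc n"
    "\<And>j. j < length a \<Longrightarrow> M + int j \<le> a ! j \<and> a ! j \<le> N + int j"
    using a unfolding Pset_iff by auto
  have Bb: "sorted_wrt (<) b" "s < length b" "length b \<le> Suc n"
    "\<And>j. j < length b \<Longrightarrow> M + int j \<le> b ! j \<and> b ! j \<le> N + int j"
    using b unfolding Pset_iff by auto
  have lens: "length b \<le> length a" and lee: "\<And>i. i < length b \<Longrightarrow> a ! i \<le> b ! i"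
    using le unfolding pd_le_def by auto
  show ?thesis
  proof (cases "length b = length a")
    case True
    define D where "D = {i. i < length a \<and> a ! i \<noteq> b ! i}"
    have "D \<noteq> {}"
    proof
      assume "D = {}" hence "\<forall>i<length a. a ! i = b ! i" unfolding D_def by auto
      hence "a = b" using True by (intro nth_equalityI) auto
      thus False using ne by simp
    qed
    moreover have "finite D" unfolding D_def by simp
    ultimately have iD: "Max D \<in> D" and imax: "\<And>k. k \<in> D \<Longrightarrow> k \<le> Max D" by auto
    define i where "i = Max D"
    have i: "i < length a" "a ! i \<noteq> b ! i" using iD unfolding i_def D_def by auto
    have ab: "a ! i + 1 \<le> b ! i" using lee[of i] i True by simp
    have eqk: "a ! k = b ! k" if "i < k" "k < length a" for k
    proof (rule ccontr)
      assume "a ! k \<noteq> b ! k" hence "k \<in> D" using that(2) unfolding D_def by auto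
      thus False using imax[of k] that(1) unfolding i_def by simp
    qed
    have gap: "a ! i + 1 < a ! k" if "i < k" "k < length a" for k
    proof -
      have "b ! i < b ! k" using Bb(1) that True by (simp add: sorted_wrt_iff_nth_less)
      thus ?thesis using ab eqk[OF that] by simp
    qed
    have bd: "a ! i + 1 \<le> N + int i" using ab Bb(4)[of i] i True by simp
    define z where "z = a[i := a ! i + 1]"
    have z: "z \<in> Pset n M N s \<and> pd_le a z \<and> phi n M N z = phi n M N a + 1"
      using incr_step[OF a i(1) bd gap] unfolding z_def by blast
    have "pd_le z b" unfolding pd_le_def z_def using True lee ab i(1) by (auto simp: nth_list_update)
    thus ?thesis using z by blast
  next
    case False
    hence lt: "length b < length a" using lens by simp
    define t where "t = length a - 1"
    have t: "t < length a" "length b \<le> t" using lt unfolding t_def by auto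
    show ?thesis
    proof (cases "a ! t + 1 \<le> N + int t")
      case True
      define z where "z = a[t := a ! t + 1]"
      have z: "z \<in> Pset n M N s \<and> pd_le a z \<and> phi n M N z = phi n M N a + 1"
      proof -
        have gap: "\<And>k. t < k \<Longrightarrow> k < length a \<Longrightarrow> a ! t + 1 < a ! k" using t_def by auto
        show ?thesis using incr_step[OF a t(1) True gap] unfolding z_def by blast
      qed
      have "pd_le z b" unfolding pd_le_def z_def using t lee by (auto simp: nth_list_update)
      thus ?thesis using z by blast
    next
      case False
      hence at: "a ! t = N + int t" using A(4)[OF t(1)] by simp
      define z where "z = butlast a"
      have zl: "length z = t" unfolding z_def t_def by simp
      have zn: "z ! j = a ! j" if "j < t" for j unfolding z_def using that zl
        by (simp add: nth_butlast z_def)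
      have srt: "sorted_wrt (<) z" unfolding z_def butlast_conv_take by (rule sorted_wrt_take[OF A(1)])
      have sz: "s < length z" using Bb(2) t zl by simp
      have zP: "z \<in> Pset n M N s" unfolding Pset_iff using srt sz zl zn A t by auto
      have le1: "pd_le a z" unfolding pd_le_def using zl zn t by auto
      have le2: "pd_le z b" unfolding pd_le_def using zl zn t lee by auto
      have g: "gph M N z j = gph M N a j + (if j = t then 1 else 0)" for j
        unfolding gph_def using zl zn at t_def t by auto
      have "phi n M N z = phi n M N a + (\<Sum>j\<le>n. if j = t then 1 else 0)"
        unfolding phi_def g sum.distrib ..
      also have "(\<Sum>j\<le>n. if j = t then (1::int) else 0) = 1"
        using Pset_len[OF a t(1)] by simp
      finally show ?thesis using zP le1 le2 by blast
    qed
  qed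
qed

definition botl :: "nat \<Rightarrow> int \<Rightarrow> int list" where
  "botl n M = map (\<lambda>i. M + int i) [0..<Suc n]"
definition topl :: "nat \<Rightarrow> int \<Rightarrow> int list" where
  "topl s N = map (\<lambda>i. N + int i) [0..<Suc s]"

lemma botl_len[simp]: "length (botl n M) = Suc n" unfolding botl_def by (simp del: upt_Suc)
lemma botl_nth[simp]: "i < Suc n \<Longrightarrow> botl n M ! i = M + int i" unfolding botl_def by (simp del: upt_Suc)
lemma topl_len[simp]: "length (topl s N) = Suc s" unfolding topl_def by (simp del: upt_Suc)
lemma topl_nth[simp]: "i < Suc s \<Longrightarrow> topl s N ! i = N + int i" unfolding topl_def by (simp del: upt_Suc)

lemma bot_P: "s \<le> n \<Longrightarrow> M \<le> N \<Longrightarrow> botl n M \<in> Pset n M N s"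
  unfolding Pset_iff by (auto simp: sorted_wrt_iff_nth_less)

lemma top_P: "s \<le> n \<Longrightarrow> M \<le> N \<Longrightarrow> topl s N \<in> Pset n M N s"
  unfolding Pset_iff by (auto simp: sorted_wrt_iff_nth_less)

lemma bot_le: "d \<in> Pset n M N s \<Longrightarrow> pd_le (botl n M) d"
  unfolding Pset_iff pd_le_def by auto

lemma le_top: "d \<in> Pset n M N s \<Longrightarrow> pd_le d (topl s N)"
  unfolding Pset_iff pd_le_def by auto

lemma phi_bot: "phi n M N (botl n M) = 0"
  unfolding phi_def gph_def by (auto intro!: sum.neutral simp: less_Suc_eq_le)

lemma phi_top: assumes "s \<le> n" shows "phi n M N (topl s N) = int (Suc n) * (N - M + 1) - int (Suc s)"
proof -
  have "phi n M N (topl s N) = (\<Sum>i\<le>n. (N - M + 1) - (if i \<le> s then 1 else 0))"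
    unfolding phi_def gph_def by (intro sum.cong) (auto simp: less_Suc_eq_le)
  also have "\<dots> = int (Suc n) * (N - M + 1) - (\<Sum>i\<le>n. if i \<le> s then 1 else 0)"
    by (simp add: sum_subtractf)
  also have "(\<Sum>i\<le>n. if i \<le> s then (1::int) else 0) = (\<Sum>i\<in>{..n} \<inter> {i. i \<le> s}. (1::int))"
    by (subst sum.inter_restrict) auto
  also have "\<dots> = int (card ({..n} \<inter> {i. i \<le> s}))" by simp
  also have "{..n} \<inter> {i. i \<le> s} = {..s}" using assms by auto
  finally show ?thesis by simp
qed

lemma finite_Pset: "finite (Pset n M N s)"
proof -
  have "Pset n M N s \<subseteq> {xs. set xs \<subseteq> {M..N + int n} \<and> length xs \<le> Suc n}"
  proof
    fix d assume d: "d \<in> Pset n M N s"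
    have "set d \<subseteq> {M..N + int n}"
    proof
      fix x assume "x \<in> set d"
      then obtain i where i: "i < length d" "x = d ! i" by (auto simp: in_set_conv_nth)
      thus "x \<in> {M..N + int n}" using d Pset_len[OF d i(1)] unfolding Pset_iff by force
    qed
    thus "d \<in> {xs. set xs \<subseteq> {M..N + int n} \<and> length xs \<le> Suc n}" using d unfolding Pset_iff by auto
  qed
  thus ?thesis by (rule finite_subset) (rule finite_lists_length_le, simp)
qed

lemma chain_hits:
  assumes mc: "maximal_chain_in C (Pset n M N s)" and sn: "s \<le> n" and MN: "M \<le> N"
    and v: "0 \<le> v" "v \<le> phi n M N (topl s N)"
  shows "\<exists>c\<in>C. phi n M N c = v"
proof (rule ccontr)
  let ?P = "Pset n M N s" and ?f = "phi n M N"
  assume nv: "\<not> ?thesis"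
  have CP: "C \<subseteq> ?P" and ch: "is_chain C"
    and mx: "\<And>C'. C \<subseteq> C' \<Longrightarrow> C' \<subseteq> ?P \<Longrightarrow> is_chain C' \<Longrightarrow> C' = C"
    using mc unfolding maximal_chain_in_def by auto
  have finC: "finite C" using finite_subset[OF CP finite_Pset] .
  have add: "z \<in> C" if zP: "z \<in> ?P" and zc: "\<And>c. c \<in> C \<Longrightarrow> pd_le c z \<or> pd_le z c" for z
  proof -
    have "is_chain (insert z C)" using ch zc unfolding is_chain_def by (auto simp: pd_le_refl)
    hence "insert z C = C" using mx[of "insert z C"] CP zP by auto
    thus ?thesis by auto
  qed
  have botC: "botl n M \<in> C" using add[OF bot_P[OF sn MN]] bot_le CP by blast
  have topC: "topl s N \<in> C" using add[OF top_P[OF sn MN]] le_top CP by blast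
  define A where "A = {c\<in>C. ?f c < v}"
  define B where "B = {c\<in>C. v < ?f c}"
  have "botl n M \<in> A" using botC nv v phi_bot[of n M N] unfolding A_def by force
  hence Ane: "A \<noteq> {}" by auto
  have "topl s N \<in> B" using topC nv v unfolding B_def by force
  hence Bne: "B \<noteq> {}" by auto
  have finA: "finite A" "finite B" using finC unfolding A_def B_def by auto
  obtain a where aA: "a \<in> A" and amax: "\<And>c. c \<in> A \<Longrightarrow> ?f c \<le> ?f a"
  proof -
    have "Max (?f ` A) \<in> ?f ` A" using finA Ane by (intro Max_in) auto
    then obtain a where "a \<in> A" "?f a = Max (?f ` A)" by auto
    thus ?thesis using that finA(1) by auto
  qed
  obtain b where bB: "b \<in> B" and bmin: "\<And>c. c \<in> B \<Longrightarrow> ?f b \<le> ?f c"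
  proof -
    have "Min (?f ` B) \<in> ?f ` B" using finA Bne by (intro Min_in) auto
    then obtain b where "b \<in> B" "?f b = Min (?f ` B)" by auto
    thus ?thesis using that finA(2) by auto
  qed
  have aC: "a \<in> C" and fa: "?f a < v" using aA unfolding A_def by auto
  have bC: "b \<in> C" and fb: "v < ?f b" using bB unfolding B_def by auto
  have aP: "a \<in> ?P" and bP: "b \<in> ?P" using aC bC CP by auto
  have cmp: "pd_le x y \<or> pd_le y x" if "x \<in> C" "y \<in> C" for x y
    using ch that unfolding is_chain_def by auto
  have below: "pd_le c a" if "c \<in> C" "?f c \<le> ?f a" for c
  proof (rule ccontr)
    assume "\<not> pd_le c a"
    hence "pd_le a c" "a \<noteq> c" using cmp[OF that(1) aC] by (auto simp: pd_le_refl)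
    hence "?f a < ?f c" using phi_strict[OF aP _] that CP by blast
    thus False using that by simp
  qed
  have above: "pd_le b c" if "c \<in> C" "?f b \<le> ?f c" for c
  proof (rule ccontr)
    assume "\<not> pd_le b c"
    hence "pd_le c b" "b \<noteq> c" using cmp[OF that(1) bC] by (auto simp: pd_le_refl)
    hence "?f c < ?f b" using phi_strict[OF _ bP] that CP by blast
    thus False using that by simp
  qed
  have ab: "pd_le a b"
  proof (rule ccontr)
    assume "\<not> pd_le a b"
    hence "pd_le b a" using cmp[OF aC bC] by auto
    hence "?f b \<le> ?f a" using phi_mono[OF bP aP] by simp
    thus False using fa fb by simp
  qed
  have "a \<noteq> b" using fa fb by auto
  then obtain z where zP: "z \<in> ?P" and az: "pd_le a z" and zb: "pd_le z b" and fz: "?f z = ?f a + 1"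
    using step_exists[OF aP bP ab] by blast
  have "z \<in> C"
  proof (rule add[OF zP])
    fix c assume cC: "c \<in> C"
    have "?f c \<noteq> v" using nv cC by auto
    hence "?f c < v \<or> v < ?f c" by auto
    thus "pd_le c z \<or> pd_le z c"
    proof
      assume "?f c < v" hence "?f c \<le> ?f a" using amax cC unfolding A_def by auto
      thus ?thesis using below[OF cC] pd_le_trans[OF _ az] by blast
    next
      assume "v < ?f c" hence "?f b \<le> ?f c" using bmin cC unfolding B_def by auto
      thus ?thesis using above[OF cC] pd_le_trans[OF zb] by blast
    qed
  qed
  moreover have "?f z \<noteq> v" using nv calculation by auto
  ultimately have "z \<in> A" using fz fa unfolding A_def by auto
  thus False using amax fz by fastforce
qed

lemma card_bound:
  assumes mc: "maximal_chain_in C (Pset n M N s)" and sn: "s \<le> n" and MN: "M \<le> N"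
  shows "int (Suc n) * (N - M + 1) \<le> int (card C) + int s"
proof -
  let ?f = "phi n M N" and ?T = "phi n M N (topl s N)"
  have CP: "C \<subseteq> Pset n M N s" using mc unfolding maximal_chain_in_def by auto
  have finC: "finite C" using finite_subset[OF CP finite_Pset] .
  have "{0..?T} \<subseteq> ?f ` C" using chain_hits[OF mc sn MN] by force
  hence "card {0..?T} \<le> card (?f ` C)" using finC by (intro card_mono) auto
  also have "\<dots> \<le> card C" using finC by (rule card_image_le)
  finally have cc: "card {0..?T} \<le> card C" .
  have T0: "?T \<ge> 0"
    using phi_mono[OF bot_P[OF sn MN] top_P[OF sn MN] bot_le[OF top_P[OF sn MN]]] phi_bot by simp
  have "?T + 1 \<le> int (card C)" using cc T0 by simp
  thus ?thesis using phi_top[OF sn, of M N] by simp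
qed

lemma min_exists:
  assumes "finite C" "C \<noteq> {}" "C \<subseteq> Pset n M N s" "is_chain C"
  shows "\<exists>d\<in>C. \<forall>c\<in>C. pd_le d c"
proof -
  let ?f = "phi n M N"
  have "Min (?f ` C) \<in> ?f ` C" using assms by (intro Min_in) auto
  then obtain d where d: "d \<in> C" "?f d = Min (?f ` C)" by auto
  have "pd_le d c" if c: "c \<in> C" for c
  proof (rule ccontr)
    assume "\<not> pd_le d c"
    hence "pd_le c d" "c \<noteq> d" using assms(4) c d(1) unfolding is_chain_def by (auto simp: pd_le_refl)
    hence "?f c < ?f d" using phi_strict[of c n M N s d] assms(3) c d(1) by auto
    moreover have "?f d \<le> ?f c" using d(2) c assms(1) by simp
    ultimately show False by simp
  qed
  thus ?thesis using d(1) by blast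
qed

lemma chain_indep:
  assumes "finite C" "C \<subseteq> Pset n M N s" "is_chain C"
    and "(\<Sum>c\<in>C. arr_scale (u c) (pure c)) = 0"
  shows "\<forall>c\<in>C. u c = 0"
  using assms
proof (induction C rule: finite_psubset_induct)
  case (psubset C)
  show ?case
  proof (cases "C = {}")
    case True thus ?thesis by simp
  next
    case False
    obtain d where dC: "d \<in> C" and dmin: "\<forall>c\<in>C. pd_le d c"
      using min_exists[OF psubset.hyps False psubset.prems(1,2)] by blast
    have dP: "d \<in> Pset n M N s" using dC psubset.prems(1) by auto
    have sd: "sorted_wrt (<) d" and dne: "0 < length d" using dP unfolding Pset_iff by auto
    have chain': "is_chain (C - {d})" using psubset.prems(2) unfolding is_chain_def by auto
    have "\<exists>i<length d. \<forall>c\<in>C - {d}. pure c i (d ! i) = 0"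
    proof (cases "C - {d} = {}")
      case True thus ?thesis using dne by auto
    next
      case False
      obtain e where eC: "e \<in> C - {d}" and emin: "\<forall>c\<in>C - {d}. pd_le e c"
        using min_exists[OF _ False _ chain'] psubset.hyps psubset.prems(1) by blast
      have de: "pd_le d e" "d \<noteq> e" using dmin eC by auto
      show ?thesis
      proof (cases "length e < length d")
        case True
        have "pure c (length d - 1) (d ! (length d - 1)) = 0" if "c \<in> C - {d}" for c
        proof -
          have "length c \<le> length e" using emin that unfolding pd_le_def by auto
          thus ?thesis using True unfolding pure_def by auto
        qed
        thus ?thesis using dne by (intro exI[of _ "length d - 1"]) auto
      next
        case False
        hence le: "length e = length d" using de(1) unfolding pd_le_def by auto
        obtain i where i: "i < length d" "d ! i \<noteq> e ! i"
          using de(2) le nth_equalityI by metis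
        have lt: "d ! i < e ! i" using de(1) i le unfolding pd_le_def by force
        have "pure c i (d ! i) = 0" if "c \<in> C - {d}" for c
        proof (cases "i < length c")
          case True
          have "e ! i \<le> c ! i" using emin that True unfolding pd_le_def by auto
          thus ?thesis using lt unfolding pure_def by auto
        next
          case False thus ?thesis unfolding pure_def by auto
        qed
        thus ?thesis using i by blast
      qed
    qed
    then obtain i where i: "i < length d" and z: "\<And>c. c \<in> C - {d} \<Longrightarrow> pure c i (d ! i) = 0" by blast
    have "(\<Sum>c\<in>C. arr_scale (u c) (pure c)) i (d ! i) = 0" using psubset.prems(3) by simp
    hence "(\<Sum>c\<in>C. u c * pure c i (d ! i)) = 0" by (simp add: sum_arr_apply arr_scale_def)
    moreover have "(\<Sum>c\<in>C. u c * pure c i (d ! i)) = u d * pure d i (d ! i)"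
      by (rule sum.remove[OF psubset.hyps(1) dC, THEN trans]) (simp add: z)
    moreover have "pure d i (d ! i) \<noteq> 0" using pure_nz[OF sd] i by simp
    ultimately have ud: "u d = 0" by simp
    have "(\<Sum>c\<in>C - {d}. arr_scale (u c) (pure c)) = 0"
      using psubset.prems(3) sum.remove[OF psubset.hyps(1) dC, of "\<lambda>c. arr_scale (u c) (pure c)"] ud
      by (simp add: arr_scale_def)
    hence "\<forall>c\<in>C - {d}. u c = 0"
      using psubset.IH[of "C - {d}"] dC psubset.prems(1) chain' by blast
    thus ?thesis using ud by blast
  qed
qed

lemma (in vector_space) span_of_indep_card:
  assumes "independent S" "S \<subseteq> span E" "finite E" "card E \<le> card S"
  shows "span E \<subseteq> span S"
proof
  fix a assume a: "a \<in> span E"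
  show "a \<in> span S"
  proof (rule ccontr)
    assume "a \<notin> span S"
    hence ind: "independent (insert a S)" using independent_insertI assms(1) by blast
    have fS: "finite S" using independent_span_bound[OF assms(3,1,2)] by simp
    have "insert a S \<subseteq> span E" using a assms(2) by auto
    hence "card (insert a S) \<le> card E" using independent_span_bound[OF assms(3) ind] by simp
    moreover have "a \<notin> S" using \<open>a \<notin> span S\<close> span_base by blast
    ultimately show False using assms(4) fS by simp
  qed
qed

lemma botl_sorted: "sorted_wrt (<) (botl t M)"
  by (auto simp: sorted_wrt_iff_nth_less)

lemma botl_B: "t \<le> n \<Longrightarrow> M \<le> N \<Longrightarrow> pure (botl t M) \<in> Bspace n M N"
  using pure_in_Bspace[OF botl_sorted] by auto

lemma HKf_W: "k \<le> t \<Longrightarrow> t \<le> n \<Longrightarrow> M \<le> N \<Longrightarrow>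
    HKf n M N k (pure (botl t M)) = (if k = t then (-1) ^ t else 0)"
  by (rule HKf_pure_val[OF botl_sorted botl_B]) auto

lemma HKf_C: assumes "c \<in> Pset n M N s" "k < s" shows "HKf n M N k (pure c) = 0"
proof -
  have c: "sorted_wrt (<) c" "s < length c" using assms(1) unfolding Pset_iff by auto
  have B: "pure c \<in> Bspace n M N" using assms(1) unfolding Pset_def by auto
  obtain t where t: "length c = Suc t" using c(2) by (cases "length c") auto
  show ?thesis using HKf_pure_val[OF c(1) B t, of k] assms(2) c(2) t by simp
qed

lemma triangular:
  assumes sn: "s \<le> n" and MN: "M \<le> N"
    and h: "\<And>k. k < s \<Longrightarrow> (\<Sum>t<s. b t * HKf n M N k (pure (botl t M))) = 0"
  shows "\<forall>t<s. b t = 0"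
proof -
  have "t < s \<longrightarrow> b t = 0" for t
  proof (induction t rule: less_induct)
    case (less t)
    show ?case
    proof
      assume ts: "t < s"
      have "(\<Sum>t'<s. b t' * HKf n M N t (pure (botl t' M))) = (\<Sum>t'<s. if t' = t then b t * (-1) ^ t else 0)"
      proof (rule sum.cong[OF refl])
        fix t' assume t': "t' \<in> {..<s}"
        show "b t' * HKf n M N t (pure (botl t' M)) = (if t' = t then b t * (-1) ^ t else 0)"
        proof (cases "t' < t")
          case True thus ?thesis using less.IH[of t'] ts by auto
        next
          case False thus ?thesis using HKf_W[of t t' n M N] t' sn MN by auto
        qed
      qed
      also have "\<dots> = b t * (-1) ^ t" using ts by simp
      finally show "b t = 0" using h[OF ts] by simp
    qed
  qed
  thus ?thesis by blast
qed

definition ind :: "nat \<times> int \<Rightarrow> array" where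
  "ind p = (\<lambda>i j. if (i, j) = p then 1 else 0)"

definition idx :: "nat \<Rightarrow> int \<Rightarrow> int \<Rightarrow> (nat \<times> int) set" where
  "idx n M N = Sigma {..n} (\<lambda>i. {M + int i..N + int i})"

lemma finite_idx: "finite (idx n M N)" unfolding idx_def by auto

lemma card_idx: "card (idx n M N) = Suc n * nat (N - M + 1)"
  unfolding idx_def by (simp add: card_SigmaI)

lemma Bspace_span: "Bspace n M N \<subseteq> arr.span (ind ` idx n M N)"
proof
  fix \<beta> assume b: "\<beta> \<in> Bspace n M N"
  have eq: "\<beta> = (\<Sum>p\<in>idx n M N. arr_scale (\<beta> (fst p) (snd p)) (ind p))"
  proof (intro ext)
    fix i j
    have "(\<Sum>p\<in>idx n M N. arr_scale (\<beta> (fst p) (snd p)) (ind p)) i j =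
        (\<Sum>p\<in>idx n M N. if p = (i, j) then \<beta> i j else 0)"
      unfolding sum_arr_apply arr_scale_def ind_def by (intro sum.cong) auto
    also have "\<dots> = (if (i, j) \<in> idx n M N then \<beta> i j else 0)"
      using finite_idx by (simp add: sum.delta')
    also have "\<dots> = \<beta> i j" using b unfolding Bspace_def idx_def by auto
    finally show "\<beta> i j = (\<Sum>p\<in>idx n M N. arr_scale (\<beta> (fst p) (snd p)) (ind p)) i j" by simp
  qed
  show "\<beta> \<in> arr.span (ind ` idx n M N)"
    by (subst eq, intro arr.span_sum arr.span_scale arr.span_base) auto
qed

lemma BHK_subspace: "arr.subspace (BHK n M N s)"
proof (rule arr.subspaceI)
  show "0 \<in> BHK n M N s" unfolding BHK_alt Bspace_def using HKf_zero by auto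
next
  fix x y assume "x \<in> BHK n M N s" "y \<in> BHK n M N s"
  thus "x + y \<in> BHK n M N s" unfolding BHK_alt Bspace_def
    by (auto simp: HKf_add) (metis add.right_neutral)+
next
  fix c x assume "x \<in> BHK n M N s"
  thus "arr_scale c x \<in> BHK n M N s" unfolding BHK_alt
    by (auto simp: HKf_scale) (auto simp: Bspace_def arr_scale_def)
qed

theorem proposition2p3:
  fixes n :: nat and M N :: int and s :: nat and C :: "int list set"
  assumes "n \<ge> 1" and "M \<le> N" and "s \<le> n"
    and "maximal_chain_in C (Pset n M N s)"
  shows "inj_on pure C \<and> arr.independent (pure ` C) \<and> arr.span (pure ` C) = BHK n M N s"
proof -
  note MN = assms(2) and sn = assms(3) and mc = assms(4)
  define W where "W t = pure (botl t M)" for t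
  define S where "S = pure ` C \<union> W ` {..<s}"
  have CP: "C \<subseteq> Pset n M N s" and ch: "is_chain C" using mc unfolding maximal_chain_in_def by auto
  have finC: "finite C" using finite_subset[OF CP finite_Pset] .
  have srtC: "\<And>c. c \<in> C \<Longrightarrow> sorted_wrt (<) c" using CP Pset_iff by blast
  have injC: "inj_on pure C" unfolding inj_on_def using pure_inj srtC by blast
  have injW: "inj_on W {..<s}"
  proof (rule inj_onI)
    fix x y assume "x \<in> {..<s}" "y \<in> {..<s}" "W x = W y"
    hence "botl x M = botl y M" unfolding W_def using pure_inj botl_sorted by blast
    hence "length (botl x M) = length (botl y M)" by simp
    thus "x = y" by simp
  qed
  have disj: "pure ` C \<inter> W ` {..<s} = {}"
  proof (rule ccontr)
    assume "pure ` C \<inter> W ` {..<s} \<noteq> {}"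
    then obtain c t where c: "c \<in> C" and t: "t < s" and e: "pure c = W t" by auto
    hence "c = botl t M" unfolding W_def using pure_inj botl_sorted srtC by blast
    moreover have "s < length c" using c CP Pset_iff by blast
    ultimately show False using t by simp
  qed
  have finS: "finite S" unfolding S_def using finC by simp
  have decomp: "(\<Sum>v\<in>S. arr_scale (u v) v) =
      (\<Sum>c\<in>C. arr_scale (u (pure c)) (pure c)) + (\<Sum>t<s. arr_scale (u (W t)) (W t))" for u
    unfolding S_def
    by (subst sum.union_disjoint[OF _ _ disj]) (use finC in \<open>auto simp: sum.reindex[OF injC] sum.reindex[OF injW]\<close>)
  have key: "\<forall>t<s. b t = 0"
    if x: "x \<in> BHK n M N s" and sx: "(\<Sum>c\<in>C. arr_scale (a c) (pure c)) + (\<Sum>t<s. arr_scale (b t) (W t)) = x" for a b x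
  proof (rule triangular[OF sn MN])
    fix k assume k: "k < s"
    have "HKf n M N k x = 0" using x k unfolding BHK_alt by auto
    hence "(\<Sum>c\<in>C. a c * HKf n M N k (pure c)) + (\<Sum>t<s. b t * HKf n M N k (W t)) = 0"
    proof -
      have "HKf n M N k x = (\<Sum>c\<in>C. a c * HKf n M N k (pure c)) + (\<Sum>t<s. b t * HKf n M N k (W t))"
        unfolding sx[symmetric] HKf_add HKf_sum HKf_scale ..
      thus ?thesis using \<open>HKf n M N k x = 0\<close> by simp
    qed
    moreover have "(\<Sum>c\<in>C. a c * HKf n M N k (pure c)) = 0"
      using HKf_C[OF _ k] CP by (auto intro!: sum.neutral)
    ultimately show "(\<Sum>t<s. b t * HKf n M N k (pure (botl t M))) = 0" unfolding W_def by simp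
  qed
  have zeroB: "0 \<in> BHK n M N s" using BHK_subspace arr.subspace_0 by blast
  have indS: "arr.independent S"
  proof (rule arr.independent_if_scalars_zero[OF finS])
    fix u v assume u0: "(\<Sum>v\<in>S. arr_scale (u v) v) = 0" and v: "v \<in> S"
    have bz: "\<forall>t<s. u (W t) = 0" using key[OF zeroB, of "\<lambda>c. u (pure c)" "\<lambda>t. u (W t)"] u0 unfolding decomp by blast
    hence "(\<Sum>t<s. arr_scale (u (W t)) (W t)) = 0" by (intro sum.neutral) (auto simp: arr_scale_def fun_eq_iff)
    hence "(\<Sum>c\<in>C. arr_scale (u (pure c)) (pure c)) = 0" using u0 unfolding decomp by simp
    hence az: "\<forall>c\<in>C. u (pure c) = 0" using chain_indep[OF finC CP ch, of "\<lambda>c. u (pure c)"] by blast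
    show "u v = 0" using v az bz unfolding S_def by auto
  qed
  have SB: "S \<subseteq> Bspace n M N"
    unfolding S_def W_def using CP botl_B[of _ n M N] sn MN by (auto simp: Pset_def)
  have cardS: "card S = card C + s"
    unfolding S_def using card_Un_disjoint[OF _ _ disj] finC card_image[OF injC] card_image[OF injW] by simp
  have cardE: "card (ind ` idx n M N) \<le> card S"
  proof -
    have "card (ind ` idx n M N) \<le> Suc n * nat (N - M + 1)"
      using card_image_le[OF finite_idx] card_idx by metis
    hence "int (card (ind ` idx n M N)) \<le> int (Suc n * nat (N - M + 1))" by linarith
    also have "int (Suc n * nat (N - M + 1)) = int (Suc n) * (N - M + 1)"
      using MN by (simp only: of_nat_mult) simp
    also have "\<dots> \<le> int (card C) + int s" by (rule card_bound[OF mc sn MN])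
    finally show ?thesis using cardS by simp
  qed
  have spanE: "arr.span (ind ` idx n M N) \<subseteq> arr.span S"
    by (rule arr.span_of_indep_card[OF indS order.trans[OF SB Bspace_span]]) (use finite_idx cardE in auto)
  have sub1: "arr.span (pure ` C) \<subseteq> BHK n M N s"
  proof (rule arr.span_minimal[OF _ BHK_subspace])
    show "pure ` C \<subseteq> BHK n M N s"
    proof
      fix x assume "x \<in> pure ` C"
      then obtain c where c: "c \<in> C" "x = pure c" by auto
      have "pure c \<in> Bspace n M N" using c CP unfolding Pset_def by auto
      thus "x \<in> BHK n M N s" using HKf_C[of c n M N s] c CP unfolding BHK_alt by auto
    qed
  qed
  have sub2: "BHK n M N s \<subseteq> arr.span (pure ` C)"
  proof
    fix x assume x: "x \<in> BHK n M N s"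
    hence "x \<in> arr.span S" using spanE Bspace_span unfolding BHK_alt by blast
    then obtain u where u: "x = (\<Sum>v\<in>S. arr_scale (u v) v)" using arr.span_finite[OF finS] by auto
    have "\<forall>t<s. u (W t) = 0" using key[OF x, of "\<lambda>c. u (pure c)" "\<lambda>t. u (W t)"] u unfolding decomp by metis
    hence "(\<Sum>t<s. arr_scale (u (W t)) (W t)) = 0" by (intro sum.neutral) (auto simp: arr_scale_def fun_eq_iff)
    hence "x = (\<Sum>c\<in>C. arr_scale (u (pure c)) (pure c))" using u unfolding decomp by simp
    also have "\<dots> \<in> arr.span (pure ` C)"
      by (intro arr.span_sum arr.span_scale arr.span_base) auto
    finally show "x \<in> arr.span (pure ` C)" .
  qed
  have "arr.independent (pure ` C)" using arr.independent_mono[OF indS] unfolding S_def by blast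
  thus ?thesis using injC sub1 sub2 by blast
qed

end
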